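(* Let $H$ be a real Hilbert space, $A:H\to c_0$ bounded linear with adjoint $A^*:\ell^1\to H$ (identifying $c_0^*=\ell^1$), let $H_n\subset H$ be a subspace of dimension $n$ with $\mathcal N(A)\cap H_n=\{0\}$. Let $f\in H$, let $u^\dagger\in\ell^1$ satisfy $A^*u^\dagger=f$, let $\delta>0$ and $f^\delta\in H$ with $\|f^\delta-f\|\le\delta$. Then every solution $u^n$ of $$\min_{u\in\ell^1}\|u\|_1\quad\text{subject to}\quad \langle z,A^*u\rangle=\langle z,f^\delta\rangle\ \ \forall z\in H_n$$ satisfies $\|u^n\|_1\le \delta\kappa_n+\|u^\dagger\|_1$.
   Context: $\kappa_n=\sup_{z\in H_n\setminus\{0\}}\dfrac{\|z\|}{\|Az\|_\infty}=\Big(\inf_{z\in H_n,\|z\|=1}\|Az\|_\infty\Big)^{-1}$, which is finite under $\mathcal N(A)\cap H_n=\{0\}$. $A^*$ is defined by $\langle A^*u,z\rangle=\sum_iu_i(Az)_i$. *)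

theory Defs
  imports "HOL-Analysis.Analysis"
begin

text \<open>Sequences in c_0 / l^1 are modelled as functions nat => real.\<close>

definition bounded_lin_to_c0 :: "('h::real_normed_vector \<Rightarrow> nat \<Rightarrow> real) \<Rightarrow> bool" where
  "bounded_lin_to_c0 A \<longleftrightarrow>
     (\<forall>i. linear (\<lambda>z. A z i)) \<and>
     (\<exists>C. \<forall>z i. \<bar>A z i\<bar> \<le> C * norm z) \<and>
     (\<forall>z. (\<lambda>i. A z i) \<longlonglongrightarrow> 0)"

definition in_l1 :: "(nat \<Rightarrow> real) \<Rightarrow> bool" where
  "in_l1 u \<longleftrightarrow> summable (\<lambda>i. \<bar>u i\<bar>)"

definition norm1 :: "(nat \<Rightarrow> real) \<Rightarrow> real" where
  "norm1 u = (\<Sum>i. \<bar>u i\<bar>)"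

definition norm_inf :: "(nat \<Rightarrow> real) \<Rightarrow> real" where
  "norm_inf x = (SUP i. \<bar>x i\<bar>)"

definition is_adj_image :: "('h::real_inner \<Rightarrow> nat \<Rightarrow> real) \<Rightarrow> (nat \<Rightarrow> real) \<Rightarrow> 'h \<Rightarrow> bool" where
  "is_adj_image A u w \<longleftrightarrow> (\<forall>z. inner w z = (\<Sum>i. u i * A z i))"

definition kappa :: "('h::real_normed_vector \<Rightarrow> nat \<Rightarrow> real) \<Rightarrow> 'h set \<Rightarrow> real" where
  "kappa A Hn = inverse (Inf {norm_inf (A z) | z. z \<in> Hn \<and> norm z = 1})"

end

theory Submission
  imports Defs
begin

definition proj :: "'a::real_inner set \<Rightarrow> 'a \<Rightarrow> 'a" where
  "proj U z = (\<Sum>u\<in>U. (inner u z / inner u u) *\<^sub>R u)"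

lemma proj_orth:
  assumes "finite U" "pairwise orthogonal U" "u \<in> U"
  shows "inner u (z - proj U z) = 0"
proof -
  have "inner u (proj U z) = (\<Sum>v\<in>U. (inner v z / inner v v) * inner u v)"
    by (simp add: proj_def inner_sum_right)
  also have "\<dots> = (inner u z / inner u u) * inner u u + (\<Sum>v\<in>U-{u}. (inner v z / inner v v) * inner u v)"
    using assms by (simp add: sum.remove)
  also have "(\<Sum>v\<in>U-{u}. (inner v z / inner v v) * inner u v) = 0"
    using assms by (intro sum.neutral) (auto simp: pairwise_def orthogonal_def)
  also have "(inner u z / inner u u) * inner u u = inner u z"
    by (cases "u = 0") auto
  finally show ?thesis by (simp add: inner_diff_right)
qed

lemma proj_in_span: "proj U z \<in> span U"
  unfolding proj_def by (intro span_sum span_scale span_base)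

lemma orth_span_resid:
  assumes "finite U" "pairwise orthogonal U" "x \<in> span U"
  shows "inner x (z - proj U z) = 0"
proof -
  have "orthogonal (z - proj U z) x"
    by (rule orthogonal_to_span[OF assms(3)])
       (metis assms(1,2) proj_orth orthogonal_def inner_commute)
  then show ?thesis by (simp add: orthogonal_def inner_commute)
qed

lemma proj_span:
  assumes "finite U" "pairwise orthogonal U" "z \<in> span U"
  shows "proj U z = z"
proof -
  have "z - proj U z \<in> span U" using assms proj_in_span span_diff by blast
  then have "inner (z - proj U z) (z - proj U z) = 0" using orth_span_resid assms by blast
  then show ?thesis by simp
qed

lemma GS:
  fixes T :: "'a::real_inner set"
  assumes "finite T"
  shows "\<exists>U. finite U \<and> pairwise orthogonal U \<and> span U = span T"
  using assms
proof (induction T rule: finite_induct)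
  case empty
  then show ?case by (intro exI[of _ "{}"]) auto
next
  case (insert a T)
  then obtain U where U: "finite U" "pairwise orthogonal U" "span U = span T" by blast
  define a' where "a' = a - proj U a"
  have o: "orthogonal a' u" if "u \<in> U" for u
    using proj_orth[OF U(1,2) that, of a] by (simp add: a'_def orthogonal_def inner_commute)
  have "span (insert a' U) = span (insert a U)"
    by (rule eq_span_insert_eq) (simp add: a'_def proj_in_span span_neg)
  also have "\<dots> = span (insert a T)" by (simp only: span_insert U(3)) 
  finally show ?case
    using U o pairwise_orthogonal_insert[OF U(2), of a'] by (intro exI[of _ "insert a' U"]) simp
qed

lemma norm_inf_ge:
  assumes "x \<longlonglongrightarrow> 0" shows "\<bar>x i\<bar> \<le> norm_inf x"
proof -
  have "Bseq x" using assms convergent_imp_Bseq convergentI by blast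
  then obtain K where "\<forall>n. norm (x n) \<le> K" unfolding Bseq_def by blast
  then have "bdd_above (range (\<lambda>i. \<bar>x i\<bar>))" by (auto intro!: bdd_aboveI[of _ K])
  then show ?thesis unfolding norm_inf_def using cSUP_upper[of i UNIV "\<lambda>i. \<bar>x i\<bar>"] by simp
qed

lemma norm_inf_le:
  assumes "\<And>i. \<bar>x i\<bar> \<le> B" shows "norm_inf x \<le> B"
  unfolding norm_inf_def using assms by (intro cSUP_least) auto

lemma span_image_lessThan:
  fixes g :: "nat \<Rightarrow> 'a::real_vector"
  shows "span (g ` {..<N}) \<subseteq> {x. \<exists>a. x = (\<Sum>i<N. a i *\<^sub>R g i)}"
proof (rule span_minimal)
  show "g ` {..<N} \<subseteq> {x. \<exists>a. x = (\<Sum>i<N. a i *\<^sub>R g i)}"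
  proof (intro subsetI)
    fix x assume "x \<in> g ` {..<N}"
    then obtain j where j: "j \<in> {..<N}" and xj: "x = g j" by auto
    have "(\<Sum>i<N. (if i = j then 1 else 0) *\<^sub>R g i) = g j"
    proof -
      have "(\<Sum>i<N. (if i = j then 1 else 0) *\<^sub>R g i) = (\<Sum>i<N. if i = j then g i else 0)"
        by (rule sum.cong) auto
      also have "\<dots> = g j" using j by simp
      finally show ?thesis .
    qed
    note eqj = this
    show "x \<in> {x. \<exists>a. x = (\<Sum>i<N. a i *\<^sub>R g i)}" unfolding xj mem_Collect_eq by (rule exI[of _ "\<lambda>i. if i = j then 1 else 0"], rule sym[OF eqj])
  qed
  show "subspace {x. \<exists>a. x = (\<Sum>i<N. a i *\<^sub>R g i)}"
    unfolding subspace_def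
  proof (intro conjI ballI allI)
    show "0 \<in> {x. \<exists>a. x = (\<Sum>i<N. a i *\<^sub>R g i)}"
      by (auto intro!: exI[of _ "\<lambda>_. 0"])
  next
    fix x y assume "x \<in> {x. \<exists>a. x = (\<Sum>i<N. a i *\<^sub>R g i)}" "y \<in> {x. \<exists>a. x = (\<Sum>i<N. a i *\<^sub>R g i)}"
    then obtain a b where "x = (\<Sum>i<N. a i *\<^sub>R g i)" "y = (\<Sum>i<N. b i *\<^sub>R g i)" by auto
    then have e: "x + y = (\<Sum>i<N. (a i + b i) *\<^sub>R g i)" by (simp add: sum.distrib scaleR_add_left)
    show "x + y \<in> {x. \<exists>a. x = (\<Sum>i<N. a i *\<^sub>R g i)}" unfolding mem_Collect_eq by (rule exI[of _ "\<lambda>i. a i + b i"], rule e)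
  next
    fix c x assume "x \<in> {x. \<exists>a. x = (\<Sum>i<N. a i *\<^sub>R g i)}"
    then obtain a where "x = (\<Sum>i<N. a i *\<^sub>R g i)" by auto
    then have e: "c *\<^sub>R x = (\<Sum>i<N. (c * a i) *\<^sub>R g i)" by (simp add: scaleR_sum_right)
    show "c *\<^sub>R x \<in> {x. \<exists>a. x = (\<Sum>i<N. a i *\<^sub>R g i)}" unfolding mem_Collect_eq by (rule exI[of _ "\<lambda>i. c * a i"], rule e)
  qed
qed

theorem lemma1:
  fixes A :: "'h::{real_inner, complete_space} \<Rightarrow> nat \<Rightarrow> real"
    and Hn :: "'h set" and n :: nat
    and f fdelta :: 'h and udag un :: "nat \<Rightarrow> real" and delta :: real
  assumes A: "bounded_lin_to_c0 A"
    and Hn: "subspace Hn" "dim Hn = n" "n \<ge> 1"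
    and ker: "\<forall>z\<in>Hn. (\<forall>i. A z i = 0) \<longrightarrow> z = 0"
    and udag: "in_l1 udag" "is_adj_image A udag f"
    and delta: "delta > 0" "norm (fdelta - f) \<le> delta"
    and un_feas: "in_l1 un" "\<forall>z\<in>Hn. (\<Sum>i. un i * A z i) = inner z fdelta"
    and un_min: "\<forall>u. in_l1 u \<and> (\<forall>z\<in>Hn. (\<Sum>i. u i * A z i) = inner z fdelta)
                   \<longrightarrow> norm1 un \<le> norm1 u"
  shows "norm1 un \<le> delta * kappa A Hn + norm1 udag"
proof -
  have lin: "\<And>i. linear (\<lambda>z. A z i)" and c0: "\<And>z. (\<lambda>i. A z i) \<longlonglongrightarrow> 0"
    using A unfolding bounded_lin_to_c0_def by auto
  obtain Cb where Cb: "\<And>z i. \<bar>A z i\<bar> \<le> Cb * norm z"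
    using A unfolding bounded_lin_to_c0_def by auto
  obtain B where B: "B \<subseteq> Hn" "independent B" "Hn \<subseteq> span B" "card B = dim Hn"
    using basis_exists by blast
  have finB: "finite B" using B(4) Hn(2,3) card.infinite by fastforce
  have spanB: "span B = Hn" using B Hn(1) span_subspace by blast
  obtain b where b: "b \<in> Hn" "b \<noteq> 0"
  proof -
    have "B \<noteq> {}" using B(4) Hn(2,3) by auto
    then obtain b where "b \<in> B" by auto
    moreover have "b \<noteq> 0" using B(2) \<open>b \<in> B\<close> dependent_zero by blast
    ultimately show ?thesis using that B(1) by blast
  qed
  obtain U where U: "finite U" "pairwise orthogonal U" "span U = Hn"
    using GS[OF finB] spanB by blast
  have UHn: "U \<subseteq> Hn" using U(3) span_superset by blast
  define w where "w i = (\<Sum>u\<in>U. (A u i / inner u u) *\<^sub>R u)" for i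
  have hw: "inner (w i) z = A z i" if z: "z \<in> Hn" for i z
  proof -
    have "z = proj U z" using proj_span[OF U(1,2)] z U(3) by simp
    then have "A z i = A (\<Sum>u\<in>U. (inner u z / inner u u) *\<^sub>R u) i" by (simp add: proj_def)
    also have "\<dots> = (\<Sum>u\<in>U. (inner u z / inner u u) * A u i)"
      by (subst linear_sum[OF lin[of i]], simp add: linear_scale[OF lin[of i]])
    also have "\<dots> = inner (w i) z"
      unfolding w_def inner_sum_left by (intro sum.cong refl) (simp add: algebra_simps)
    finally show ?thesis by simp
  qed
  have wHn: "w i \<in> Hn" for i
  proof -
    have "w i \<in> span U" unfolding w_def by (intro span_sum span_scale span_base)
    then show ?thesis using U(3) by simp
  qed
  have w0: "w \<longlonglongrightarrow> 0"
    unfolding w_def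
  proof (rule tendsto_null_sum)
    fix u
    have "(\<lambda>i. (A u i / inner u u) *\<^sub>R u) \<longlonglongrightarrow> 0 *\<^sub>R u"
      by (intro tendsto_scaleR tendsto_divide_zero c0 tendsto_const)
    then show "(\<lambda>i. (A u i / inner u u) *\<^sub>R u) \<longlonglongrightarrow> 0" by simp
  qed

  have rwHn: "range w \<subseteq> Hn" using wHn by auto
  obtain B' where B': "B' \<subseteq> range w" "independent B'" "range w \<subseteq> span B'"
    using maximal_independent_subset by blast
  have "B' \<subseteq> span U" using B'(1) rwHn U(3) by auto
  then have finB': "finite B'"
    using independent_span_bound[OF U(1) B'(2)] by blast
  obtain I where I: "finite I" "B' = w ` I"
    using finite_subset_image[OF finB' B'(1)] by blast
  obtain N where N: "I \<subseteq> {..<N}" using finite_nat_bounded[OF I(1)] by blast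
  have rw_span: "range w \<subseteq> span (w ` {..<N})"
  proof -
    have "B' \<subseteq> w ` {..<N}" using I(2) N by auto
    then have "span B' \<subseteq> span (w ` {..<N})" by (rule span_mono)
    then show ?thesis using B'(3) by blast
  qed
  have "finite (w ` {..<N})" by simp
  from GS[OF this] obtain U2 where U2: "finite U2" "pairwise orthogonal U2" "span U2 = span (w ` {..<N})"
    by blast
  have spanw_Hn: "span (w ` {..<N}) \<subseteq> Hn"
    by (rule span_minimal[OF _ Hn(1)]) (use rwHn in auto)
  have Hn_spanw: "Hn \<subseteq> span (w ` {..<N})"
  proof
    fix z assume z: "z \<in> Hn"
    define r where "r = z - proj U2 z"
    have "proj U2 z \<in> Hn" using proj_in_span[of U2 z] U2(3) spanw_Hn by blast
    then have rHn: "r \<in> Hn" unfolding r_def using z Hn(1) subspace_diff by blast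
    have "A r i = 0" for i
    proof -
      have "w i \<in> span U2" using rw_span U2(3) by auto
      then have "inner (w i) r = 0" unfolding r_def by (rule orth_span_resid[OF U2(1,2)])
      then show ?thesis using hw[OF rHn] by simp
    qed
    then have "r = 0" using ker rHn by blast
    then have "z = proj U2 z" by (simp add: r_def)
    then show "z \<in> span (w ` {..<N})" using proj_in_span[of U2 z] U2(3) by simp
  qed
  have "U \<subseteq> {x. \<exists>a. x = (\<Sum>i<N. a i *\<^sub>R w i)}"
    using order_trans[OF UHn order_trans[OF Hn_spanw span_image_lessThan]] .
  then have "\<forall>u\<in>U. \<exists>a. u = (\<Sum>i<N. a i *\<^sub>R w i)" by blast
  from bchoice[OF this] obtain a where a0: "\<forall>u\<in>U. u = (\<Sum>i<N. a u i *\<^sub>R w i)" ..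
  have a: "u = (\<Sum>i<N. a u i *\<^sub>R w i)" if "u \<in> U" for u using bspec[OF a0 that] .
  define m where "m z = norm_inf (A z)" for z
  have m_ge: "\<bar>A z i\<bar> \<le> m z" for z i
    unfolding m_def by (rule norm_inf_ge[OF c0])
  have m_nonneg: "0 \<le> m z" for z using m_ge[of z 0] by linarith
  define K where "K = (\<Sum>u\<in>U. (\<Sum>i<N. \<bar>a u i\<bar>) * norm u / inner u u)"
  define C where "C = K + 1"
  have Knn: "0 \<le> K" unfolding K_def by (intro sum_nonneg) auto
  have Cpos: "C > 0" using Knn by (simp add: C_def)
  have normC: "norm z \<le> C * m z" if z: "z \<in> Hn" for z
  proof -
    have "z = proj U z" using proj_span[OF U(1,2)] z U(3) by simp
    then have "norm z = norm (\<Sum>u\<in>U. (inner u z / inner u u) *\<^sub>R u)" by (simp add: proj_def)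
    also have "\<dots> \<le> (\<Sum>u\<in>U. norm ((inner u z / inner u u) *\<^sub>R u))" by (rule norm_sum)
    also have "\<dots> \<le> (\<Sum>u\<in>U. (\<Sum>i<N. \<bar>a u i\<bar>) * norm u / inner u u * m z)"
    proof (rule sum_mono)
      fix u assume u: "u \<in> U"
      have "inner u z = inner (\<Sum>i<N. a u i *\<^sub>R w i) z" using a[OF u] by simp
      also have "\<dots> = (\<Sum>i<N. a u i * inner (w i) z)" by (simp add: inner_sum_left)
      also have "\<dots> = (\<Sum>i<N. a u i * A z i)" using hw[OF z] by simp
      also have "\<bar>\<dots>\<bar> \<le> (\<Sum>i<N. \<bar>a u i\<bar> * m z)"
        by (rule order_trans[OF sum_abs]) (auto intro!: sum_mono simp: abs_mult intro: mult_left_mono m_ge)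
      finally have iz: "\<bar>inner u z\<bar> \<le> (\<Sum>i<N. \<bar>a u i\<bar>) * m z" by (simp add: sum_distrib_right)
      have "norm ((inner u z / inner u u) *\<^sub>R u) = \<bar>inner u z\<bar> / inner u u * norm u"
        by simp
      also have "\<dots> \<le> (\<Sum>i<N. \<bar>a u i\<bar>) * m z / inner u u * norm u"
        by (intro mult_right_mono divide_right_mono iz) auto
      finally show "norm ((inner u z / inner u u) *\<^sub>R u) \<le> (\<Sum>i<N. \<bar>a u i\<bar>) * norm u / inner u u * m z"
        by (simp add: field_simps)
    qed
    also have "\<dots> = K * m z" unfolding K_def by (simp add: sum_distrib_right)
    also have "\<dots> \<le> C * m z" using m_nonneg[of z] by (simp add: C_def algebra_simps)
    finally show ?thesis .
  qed
  define S where "S = {m z | z. z \<in> Hn \<and> norm z = 1}"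
  define mu where "mu = Inf S"
  have kap: "kappa A Hn = inverse mu" unfolding kappa_def mu_def S_def m_def by simp
  have bn: "b /\<^sub>R norm b \<in> Hn" using b(1) Hn(1) subspace_scale by blast
  have "norm (b /\<^sub>R norm b) = 1" using b(2) by simp
  then have Sne: "S \<noteq> {}" using bn unfolding S_def by blast
  have Sbdd: "bdd_below S" unfolding S_def by (rule bdd_belowI[of _ 0]) (auto simp: m_nonneg)
  have "1 / C \<le> mu" unfolding mu_def
  proof (rule cInf_greatest[OF Sne])
    fix x assume "x \<in> S"
    then obtain z where z: "z \<in> Hn" "norm z = 1" "x = m z" unfolding S_def by blast
    then have "1 \<le> C * m z" using normC[OF z(1)] by simp
    then show "1 / C \<le> x" using Cpos z(3) by (simp add: divide_le_eq mult.commute)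
  qed
  then have mupos: "mu > 0" using Cpos by (meson less_le_trans zero_less_divide_1_iff)
  have key: "norm x \<le> inverse mu * m x" if x: "x \<in> Hn" for x
  proof (cases "x = 0")
    case True then show ?thesis using m_nonneg[of x] mupos by simp
  next
    case False
    define z where "z = x /\<^sub>R norm x"
    have zHn: "z \<in> Hn" unfolding z_def using x Hn(1) subspace_scale by blast
    have nz: "norm z = 1" using False by (simp add: z_def)
    have Az: "A z i = A x i / norm x" for i
      unfolding z_def using linear_scale[OF lin[of i]] by (simp add: divide_inverse mult.commute)
    have "m z \<le> m x / norm x" unfolding m_def[of z]
    proof (rule norm_inf_le)
      fix i show "\<bar>A z i\<bar> \<le> m x / norm x"
        unfolding Az using m_ge[of x i] by (simp add: divide_right_mono)
    qed
    moreover have "mu \<le> m z" unfolding mu_def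
      by (rule cInf_lower[OF _ Sbdd]) (use zHn nz S_def in blast)
    ultimately have "mu \<le> m x / norm x" by linarith
    then have "mu * norm x \<le> m x" using False by (simp add: le_divide_eq)
    then show ?thesis using mupos by (simp add: field_simps)
  qed
  define R where "R = delta * inverse mu"
  have Rpos: "R > 0" using delta(1) mupos by (simp add: R_def)
  have "1 / (2 * C) > 0" using Cpos by simp
  then obtain N' where N': "\<And>i. i \<ge> N' \<Longrightarrow> norm (w i) < 1 / (2 * C)"
    using w0 unfolding LIMSEQ_iff by fastforce
  define M where "M = Suc N'"
  have tail: "\<bar>A x i\<bar> \<le> m x / 2" if x: "x \<in> Hn" and i: "i \<ge> M" for x i
  proof -
    have "\<bar>A x i\<bar> = \<bar>inner (w i) x\<bar>" using hw[OF x] by simp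
    also have "\<dots> \<le> norm (w i) * norm x" by (rule Cauchy_Schwarz_ineq2)
    also have "\<dots> \<le> (1 / (2 * C)) * (C * m x)"
      using N'[of i] i normC[OF x] Cpos by (intro mult_mono) (auto simp: M_def)
    also have "\<dots> = m x / 2" using Cpos by simp
    finally show ?thesis .
  qed
  define g where "g = fdelta - f"
  define p where "p = proj U g"
  have pHn: "p \<in> Hn" using proj_in_span[of U g] U(3) by (simp add: p_def)
  have hp: "inner z p = inner z g" if "z \<in> Hn" for z
  proof -
    have "inner z (g - p) = 0" unfolding p_def
      by (rule orth_span_resid[OF U(1,2)]) (use that U(3) in simp)
    then show ?thesis by (simp add: inner_diff_right)
  qed
  define S' where "S' = (\<lambda>i. R *\<^sub>R w i) ` {..<M} \<union> (\<lambda>i. (- R) *\<^sub>R w i) ` {..<M}"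
  define Kc where "Kc = convex hull S'"
  have finS': "finite S'" unfolding S'_def by simp
  have S'ne: "S' \<noteq> {}" unfolding S'_def M_def by blast
  have S'Hn: "S' \<subseteq> Hn" unfolding S'_def using wHn Hn(1) subspace_scale by blast
  have cKc: "compact Kc" unfolding Kc_def by (rule finite_imp_compact_convex_hull[OF finS'])
  have Kne: "Kc \<noteq> {}" unfolding Kc_def using S'ne hull_subset by fastforce
  have convK: "convex Kc" unfolding Kc_def by (rule convex_convex_hull)
  have KHn: "Kc \<subseteq> Hn" unfolding Kc_def
    by (rule hull_minimal[OF S'Hn]) (rule subspace_imp_convex[OF Hn(1)])
  have S'K: "S' \<subseteq> Kc" unfolding Kc_def by (rule hull_subset)
  have pK: "p \<in> Kc"
  proof (rule ccontr)
    assume pn: "p \<notin> Kc"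
    have "continuous_on Kc (dist p)" by (intro continuous_intros)
    then obtain y where y: "y \<in> Kc" "\<And>x. x \<in> Kc \<Longrightarrow> dist p y \<le> dist p x"
      using continuous_attains_inf[OF cKc Kne] by blast
    define a where "a = p - y"
    have an0: "a \<noteq> 0" using y(1) pn by (auto simp: a_def)
    have aHn: "a \<in> Hn" unfolding a_def using pHn y(1) KHn Hn(1) subspace_diff by blast
    have hsep: "inner a x \<le> inner a y" if x: "x \<in> Kc" for x
    proof (rule ccontr)
      assume "\<not> inner a x \<le> inner a y"
      then have "inner (p - y) (x - y) > 0" by (simp add: a_def inner_diff_right)
      then obtain u where u: "u > 0" "u \<le> 1" "dist (y + u *\<^sub>R (x - y)) p < dist y p"
        using closer_point_lemma by blast
      have "(1 - u) *\<^sub>R y + u *\<^sub>R x \<in> Kc"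
        using convexD_alt[OF convK y(1) x] u by simp
      moreover have "(1 - u) *\<^sub>R y + u *\<^sub>R x = y + u *\<^sub>R (x - y)"
        by (simp add: algebra_simps)
      ultimately have "dist p y \<le> dist p (y + u *\<^sub>R (x - y))" using y(2) by metis
      then show False using u(3) by (simp add: dist_commute)
    qed
    define \<beta> where "\<beta> = inner a y"
    have fin: "R * \<bar>A a i\<bar> \<le> \<beta>" if i: "i < M" for i
    proof -
      have k1: "R *\<^sub>R w i \<in> Kc" and k2: "(- R) *\<^sub>R w i \<in> Kc" using S'K i unfolding S'_def by auto
      have "inner a (R *\<^sub>R w i) \<le> \<beta>" "inner a ((- R) *\<^sub>R w i) \<le> \<beta>"
        unfolding \<beta>_def by (rule hsep[OF k1], rule hsep[OF k2])
      moreover have "inner a (w i) = A a i" using hw[OF aHn] by (simp add: inner_commute)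
      ultimately have "R * A a i \<le> \<beta>" "- R * A a i \<le> \<beta>" by auto
      then show ?thesis by (cases "A a i \<ge> 0") (auto simp: abs_if)
    qed
    have "inner a p - \<beta> = inner a a" by (simp add: \<beta>_def a_def inner_diff_right)
    moreover have "inner a a > 0" using an0 by simp
    ultimately have blt: "\<beta> < inner a p" by linarith
    have "inner a p = inner a g" using hp[OF aHn] .
    also have "\<dots> \<le> norm a * norm g" by (rule norm_cauchy_schwarz)
    also have "\<dots> \<le> (inverse mu * m a) * delta"
      using key[OF aHn] delta(2) m_nonneg[of a] mupos
      by (intro mult_mono) (auto simp: g_def)
    also have "\<dots> = R * m a" by (simp add: R_def)
    finally have pup: "inner a p \<le> R * m a" .
    have "norm_inf (A a) \<le> max (\<beta> / R) (m a / 2)"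
    proof (rule norm_inf_le)
      fix i show "\<bar>A a i\<bar> \<le> max (\<beta> / R) (m a / 2)"
      proof (cases "i < M")
        case True
        then have "\<bar>A a i\<bar> \<le> \<beta> / R" using fin[OF True] Rpos by (simp add: pos_le_divide_eq mult.commute)
        then show ?thesis by simp
      next
        case False
        then show ?thesis using tail[OF aHn, of i] by simp
      qed
    qed
    then have "m a \<le> max (\<beta> / R) (m a / 2)" by (simp add: m_def)
    then show False
    proof (cases "\<beta> / R \<ge> m a / 2")
      case True
      with \<open>m a \<le> max (\<beta> / R) (m a / 2)\<close> have "m a \<le> \<beta> / R" by simp
      then have "R * m a \<le> \<beta>" using Rpos by (simp add: pos_le_divide_eq mult.commute)
      then show False using blt pup by linarith
    next
      case False
      with \<open>m a \<le> max (\<beta> / R) (m a / 2)\<close> have "m a \<le> 0" by simp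
      then have "norm a \<le> 0" using key[OF aHn] mupos
        by (metis mult_nonneg_nonpos inverse_nonnegative_iff_nonnegative less_le order_trans)
      then show False using an0 by simp
    qed
  qed
  define L where "L = {x. \<exists>v. x = (\<Sum>i<M. v i *\<^sub>R w i) \<and> (\<Sum>i<M. \<bar>v i\<bar>) \<le> R}"
  have convL: "convex L"
  proof (rule convexI)
    fix x y and s t :: real
    assume x: "x \<in> L" and y: "y \<in> L" and st0: "0 \<le> s" "0 \<le> t" "s + t = 1"
    have st: "0 \<le> s \<and> 0 \<le> t \<and> s + t = 1" using st0 by simp
    from x obtain vx where vx: "x = (\<Sum>i<M. vx i *\<^sub>R w i)" "(\<Sum>i<M. \<bar>vx i\<bar>) \<le> R"
      unfolding L_def by blast
    from y obtain vy where vy: "y = (\<Sum>i<M. vy i *\<^sub>R w i)" "(\<Sum>i<M. \<bar>vy i\<bar>) \<le> R"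
      unfolding L_def by blast
    have e: "s *\<^sub>R x + t *\<^sub>R y = (\<Sum>i<M. (s * vx i + t * vy i) *\<^sub>R w i)"
      by (simp add: vx(1) vy(1) scaleR_sum_right sum.distrib scaleR_add_left)
    have "(\<Sum>i<M. \<bar>s * vx i + t * vy i\<bar>) \<le> (\<Sum>i<M. s * \<bar>vx i\<bar> + t * \<bar>vy i\<bar>)"
      by (rule sum_mono) (use st in \<open>auto simp: abs_mult intro: order_trans[OF abs_triangle_ineq]\<close>)
    also have "\<dots> = s * (\<Sum>i<M. \<bar>vx i\<bar>) + t * (\<Sum>i<M. \<bar>vy i\<bar>)"
      by (simp add: sum.distrib sum_distrib_left)
    also have "\<dots> \<le> s * R + t * R"
      using st vx(2) vy(2) by (intro add_mono mult_left_mono) auto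
    also have "\<dots> = (s + t) * R" by (simp add: algebra_simps)
    also have "\<dots> = R" using st by simp
    finally have b: "(\<Sum>i<M. \<bar>s * vx i + t * vy i\<bar>) \<le> R" .
    show "s *\<^sub>R x + t *\<^sub>R y \<in> L" unfolding L_def mem_Collect_eq
      by (rule exI[of _ "\<lambda>i. s * vx i + t * vy i"], rule conjI[OF e b])
  qed
  have S'L: "S' \<subseteq> L"
  proof
    fix x assume "x \<in> S'"
    then obtain j c where j: "j < M" and c: "c = R \<or> c = - R" and xj: "x = c *\<^sub>R w j"
      unfolding S'_def by blast
    have e1: "(\<Sum>i<M. (if i = j then c else 0) *\<^sub>R w i) = (\<Sum>i<M. if i = j then c *\<^sub>R w i else 0)"
      by (rule sum.cong) auto
    have e: "x = (\<Sum>i<M. (if i = j then c else 0) *\<^sub>R w i)"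
      unfolding e1 using j xj by simp
    have e2: "(\<Sum>i<M. \<bar>if i = j then c else 0\<bar>) = (\<Sum>i<M. if i = j then \<bar>c\<bar> else 0)"
      by (rule sum.cong) auto
    have b: "(\<Sum>i<M. \<bar>if i = j then c else 0\<bar>) \<le> R"
      unfolding e2 using j c Rpos by auto
    show "x \<in> L" unfolding L_def mem_Collect_eq
      by (rule exI[of _ "\<lambda>i. if i = j then c else 0"], rule conjI[OF e b])
  qed
  have "Kc \<subseteq> L" unfolding Kc_def by (rule hull_minimal[of S' L convex, OF S'L convL])
  with pK obtain v where v: "p = (\<Sum>i<M. v i *\<^sub>R w i)" "(\<Sum>i<M. \<bar>v i\<bar>) \<le> R"
    unfolding L_def by blast
  define vv where "vv i = (if i < M then v i else 0)" for i
  define u' where "u' i = udag i + vv i" for i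
  have sud: "summable (\<lambda>i. \<bar>udag i\<bar>)" using udag(1) unfolding in_l1_def .
  have svv: "summable (\<lambda>i. \<bar>vv i\<bar>)"
    by (rule summable_finite[of "{..<M}"]) (auto simp: vv_def)
  have svv_sum: "(\<Sum>i. \<bar>vv i\<bar>) = (\<Sum>i<M. \<bar>v i\<bar>)"
  proof -
    have "(\<Sum>i. \<bar>vv i\<bar>) = (\<Sum>i<M. \<bar>vv i\<bar>)"
      by (rule suminf_finite) (auto simp: vv_def)
    also have "\<dots> = (\<Sum>i<M. \<bar>v i\<bar>)" by (rule sum.cong) (auto simp: vv_def)
    finally show ?thesis .
  qed
  have bnd: "\<bar>u' i\<bar> \<le> \<bar>udag i\<bar> + \<bar>vv i\<bar>" for i unfolding u'_def by (rule abs_triangle_ineq)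
  have su': "summable (\<lambda>i. \<bar>u' i\<bar>)"
    by (rule summable_comparison_test[OF _ summable_add[OF sud svv]]) (use bnd in auto)
  have l1: "in_l1 u'" unfolding in_l1_def by (rule su')
  have n1: "norm1 u' \<le> norm1 udag + R"
  proof -
    have "norm1 u' \<le> (\<Sum>i. \<bar>udag i\<bar> + \<bar>vv i\<bar>)" unfolding norm1_def
      by (rule suminf_le[OF bnd su' summable_add[OF sud svv]])
    also have "\<dots> = norm1 udag + (\<Sum>i. \<bar>vv i\<bar>)" unfolding norm1_def
      by (rule suminf_add[OF sud svv, symmetric])
    finally show ?thesis using svv_sum v(2) by linarith
  qed
  have feas: "(\<Sum>i. u' i * A z i) = inner z fdelta" if z: "z \<in> Hn" for z
  proof -
    have s1: "summable (\<lambda>i. udag i * A z i)"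
    proof (rule summable_comparison_test[OF _ summable_mult2[OF sud, of "Cb * norm z"]])
      show "\<exists>N. \<forall>n\<ge>N. norm (udag n * A z n) \<le> \<bar>udag n\<bar> * (Cb * norm z)"
        by (auto simp: abs_mult intro!: mult_left_mono Cb)
    qed
    have s2: "summable (\<lambda>i. vv i * A z i)"
      by (rule summable_finite[of "{..<M}"]) (auto simp: vv_def)
    have "(\<Sum>i. u' i * A z i) = (\<Sum>i. udag i * A z i + vv i * A z i)"
      by (simp add: u'_def algebra_simps)
    also have "\<dots> = (\<Sum>i. udag i * A z i) + (\<Sum>i. vv i * A z i)"
      by (rule suminf_add[OF s1 s2, symmetric])
    also have "(\<Sum>i. udag i * A z i) = inner f z"
      using udag(2) unfolding is_adj_image_def by simp
    also have "(\<Sum>i. vv i * A z i) = (\<Sum>i<M. vv i * A z i)"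
      by (rule suminf_finite) (auto simp: vv_def)
    also have "\<dots> = (\<Sum>i<M. v i * inner (w i) z)"
      by (rule sum.cong) (auto simp: vv_def hw[OF z])
    also have "\<dots> = inner p z" by (simp add: v(1) inner_sum_left)
    also have "\<dots> = inner z g" using hp[OF z] by (simp add: inner_commute)
    also have "inner f z + inner z g = inner z fdelta"
      by (simp add: g_def inner_diff_right inner_commute)
    finally show ?thesis .
  qed
  have "norm1 un \<le> norm1 u'" using un_min l1 feas by blast
  with n1 kap show ?thesis by (simp add: R_def)
qed

end
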